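(* Let $K$ be a field of characteristic $0$ and let $m=x_1^{\alpha_1}\cdots x_n^{\alpha_n}$ be a monomial with $\alpha_i\ge 1$ for all $i$. The group of invariants $\{A\in GL_n(K): m(A.x)=m(x)\}$ of $m$ is generated by: (i) the diagonal matrices $\mathrm{diag}(\lambda_1,\ldots,\lambda_n)$ with $\prod_{i=1}^n\lambda_i^{\alpha_i}=1$; (ii) the permutation matrices which map each variable $x_i$ to a variable $x_{\pi(i)}$ with $\alpha_i=\alpha_{\pi(i)}$.
   Context: $m(A.x)$ denotes the polynomial obtained from $m$ by the linear change of variables $x\mapsto Ax$. *)

theory Defs
  imports "HOL-Analysis.Analysis"
begin

definition monomial_fun :: "('n::finite \<Rightarrow> nat) \<Rightarrow> 'a::field ^ 'n \<Rightarrow> 'a" where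
  "monomial_fun \<alpha> x = (\<Prod>i\<in>UNIV. (x $ i) ^ (\<alpha> i))"

definition invariant_group :: "('n::finite \<Rightarrow> nat) \<Rightarrow> ('a::field ^ 'n ^ 'n) set" where
  "invariant_group \<alpha> = {A. invertible A \<and> (\<forall>x. monomial_fun \<alpha> (A *v x) = monomial_fun \<alpha> x)}"

definition diag_mat :: "('n::finite \<Rightarrow> 'a::field) \<Rightarrow> 'a ^ 'n ^ 'n" where
  "diag_mat l = (\<chi> i j. if i = j then l i else 0)"

definition diag_generators :: "('n::finite \<Rightarrow> nat) \<Rightarrow> ('a::field ^ 'n ^ 'n) set" where
  "diag_generators \<alpha> = {diag_mat l | l. (\<Prod>i\<in>UNIV. (l i) ^ (\<alpha> i)) = 1}"

text \<open>Permutation matrix substituting x_i by x_(pi i): (P x)_i = x_(pi i).\<close>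
definition perm_mat :: "('n::finite \<Rightarrow> 'n) \<Rightarrow> 'a::field ^ 'n ^ 'n" where
  "perm_mat \<pi> = (\<chi> i j. if j = \<pi> i then 1 else 0)"

definition perm_generators :: "('n::finite \<Rightarrow> nat) \<Rightarrow> ('a::field ^ 'n ^ 'n) set" where
  "perm_generators \<alpha> = {perm_mat \<pi> | \<pi>. \<pi> permutes UNIV \<and> (\<forall>i. \<alpha> i = \<alpha> (\<pi> i))}"

inductive_set generated_group :: "('a::field ^ 'n::finite ^ 'n) set \<Rightarrow> ('a ^ 'n ^ 'n) set"
  for S where
  gen_one: "mat 1 \<in> generated_group S"
| gen_base: "A \<in> S \<Longrightarrow> A \<in> generated_group S"
| gen_mult: "A \<in> generated_group S \<Longrightarrow> B \<in> generated_group S \<Longrightarrow> A ** B \<in> generated_group S"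
| gen_inv: "A \<in> generated_group S \<Longrightarrow> matrix_inv A \<in> generated_group S"

end

theory Submission
  imports Defs "HOL-Combinatorics.Permutations"
begin

lemma minv_props:
  fixes A :: "'a::field ^ 'n::finite ^ 'n"
  assumes "invertible A"
  shows "A ** matrix_inv A = mat 1 \<and> matrix_inv A ** A = mat 1"
  using assms unfolding invertible_def matrix_inv_def by (rule someI_ex)

lemma minv_invertible:
  fixes A :: "'a::field ^ 'n::finite ^ 'n"
  assumes "invertible A"
  shows "invertible (matrix_inv A)"
  using minv_props[OF assms] unfolding invertible_def by blast

lemma sum_ifmult: "(\<Sum>j\<in>UNIV. (if P j then a j else 0) * (x j::'a::field)) = (\<Sum>j\<in>UNIV. if P j then a j * x j else 0)"
  by (rule sum.cong) auto

lemma mv_diag: "(diag_mat l :: 'a::field ^ 'n::finite ^ 'n) *v x = (\<chi> i. l i * x$i)"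
  by (simp add: matrix_vector_mult_def diag_mat_def vec_eq_iff sum_ifmult)

lemma mv_perm: "(perm_mat p :: 'a::field ^ 'n::finite ^ 'n) *v x = (\<chi> i. x $ p i)"
  by (simp add: matrix_vector_mult_def perm_mat_def vec_eq_iff sum_ifmult)

lemma mv_perm_comp: "(perm_mat p :: 'a::field ^ 'n::finite ^ 'n) ** perm_mat q = perm_mat (q \<circ> p)"
  by (simp add: matrix_eq mv_perm flip: matrix_vector_mul_assoc)

lemma perm_mat_id: "(perm_mat id :: 'a::field ^ 'n::finite ^ 'n) = mat 1"
  by (simp add: matrix_eq mv_perm)

lemma diag_mult: "(diag_mat l :: 'a::field ^ 'n::finite ^ 'n) ** diag_mat l' = diag_mat (\<lambda>i. l i * l' i)"
  by (simp add: matrix_eq mv_diag mult.assoc flip: matrix_vector_mul_assoc)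

lemma diag_one: "(diag_mat (\<lambda>i. 1) :: 'a::field ^ 'n::finite ^ 'n) = mat 1"
  by (simp add: matrix_eq mv_diag)

lemma mon_diag:
  "monomial_fun \<alpha> ((diag_mat l :: 'a::field ^ 'n::finite ^ 'n) *v x)
     = (\<Prod>i\<in>UNIV. (l i) ^ (\<alpha> i)) * monomial_fun \<alpha> x"
  by (simp add: monomial_fun_def mv_diag power_mult_distrib prod.distrib)

lemma mon_perm:
  assumes "p permutes UNIV" "\<forall>i. \<alpha> i = \<alpha> (p i)"
  shows "monomial_fun \<alpha> ((perm_mat p :: 'a::field ^ 'n::finite ^ 'n) *v x) = monomial_fun \<alpha> x"
proof -
  have "monomial_fun \<alpha> (perm_mat p *v x) = (\<Prod>i\<in>UNIV. (x $ p i) ^ \<alpha> (p i))"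
    unfolding monomial_fun_def mv_perm using assms(2) by (metis vec_lambda_beta)
  also have "\<dots> = (\<Prod>i\<in>UNIV. (x $ i) ^ \<alpha> i)"
    using prod.reindex_bij_betw[OF permutes_imp_bij[OF assms(1)], of "\<lambda>i. (x $ i) ^ \<alpha> i"]
    by simp
  finally show ?thesis unfolding monomial_fun_def .
qed

lemma gen_sub:
  fixes \<alpha> :: "'n::finite \<Rightarrow> nat"
  assumes "\<forall>i. \<alpha> i \<ge> 1"
  assumes "A \<in> generated_group (diag_generators \<alpha> \<union> perm_generators \<alpha>)"
  shows "(A :: 'a::field ^ 'n ^ 'n) \<in> invariant_group \<alpha>"
  using assms(2)
proof induction
  case gen_one
  then show ?case unfolding invariant_group_def invertible_def by auto
next
  case (gen_base A)
  then show ?case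
  proof
    assume "A \<in> diag_generators \<alpha>"
    then obtain l where A: "A = diag_mat l" and l: "(\<Prod>i\<in>UNIV. (l i) ^ (\<alpha> i)) = (1::'a)"
      unfolding diag_generators_def by blast
    have nz: "l i \<noteq> 0" for i
    proof
      assume "l i = 0"
      then have "(\<Prod>i\<in>UNIV. (l i) ^ (\<alpha> i)) = 0"
      proof -
        have "l i ^ \<alpha> i = 0" using \<open>l i = 0\<close> assms(1) by (simp add: Suc_le_eq)
        then show ?thesis by (simp add: prod_zero_iff) blast
      qed
      with l show False by simp
    qed
    have "invertible A"
      unfolding invertible_def A
      by (rule exI[of _ "diag_mat (\<lambda>i. inverse (l i))"]) (simp add: diag_mult nz diag_one)
    then show ?thesis unfolding invariant_group_def using A l by (auto simp: mon_diag)
  next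
    assume "A \<in> perm_generators \<alpha>"
    then obtain p where A: "A = perm_mat p" and p: "p permutes UNIV" "\<forall>i. \<alpha> i = \<alpha> (p i)"
      unfolding perm_generators_def by blast
    have "invertible A"
      unfolding invertible_def A
      by (rule exI[of _ "perm_mat (inv p)"])
        (simp add: mv_perm_comp perm_mat_id permutes_inv_o[OF p(1)])
    then show ?thesis unfolding invariant_group_def using A p mon_perm by auto
  qed
next
  case (gen_mult A B)
  then show ?case unfolding invariant_group_def
    by (auto simp: invertible_mult simp flip: matrix_vector_mul_assoc)
next
  case (gen_inv A)
  then have inv: "invertible A" and m: "\<forall>x. monomial_fun \<alpha> (A *v x) = monomial_fun \<alpha> x"
    unfolding invariant_group_def by auto
  have "monomial_fun \<alpha> (matrix_inv A *v x) = monomial_fun \<alpha> x" for x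
    using m[rule_format, of "matrix_inv A *v x"] minv_props[OF inv]
    by (simp add: matrix_vector_mul_assoc)
  then show ?case unfolding invariant_group_def using minv_invertible[OF inv] by auto
qed

lemma inv_sub:
  fixes \<alpha> :: "'n::finite \<Rightarrow> nat" and A :: "'a::field_char_0 ^ 'n ^ 'n"
  assumes pos: "\<forall>i. \<alpha> i \<ge> 1" and A: "A \<in> invariant_group \<alpha>"
  shows "A \<in> generated_group (diag_generators \<alpha> \<union> perm_generators \<alpha>)"
proof -
  from A have inv: "invertible A" and m: "\<And>x. monomial_fun \<alpha> (A *v x) = monomial_fun \<alpha> x"
    by (auto simp: invariant_group_def)
  obtain B where BA: "B ** A = mat 1" and AB: "A ** B = mat 1" using inv invertible_def by blast
  have ex: "\<exists>j. A$i$j \<noteq> 0" for i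
  proof (rule ccontr)
    assume "\<not> ?thesis" then have z: "\<And>j. A$i$j = 0" by auto
    have "(A ** B)$i$i = 0" by (simp add: matrix_matrix_mult_def z)
    with AB show False by (simp add: mat_def)
  qed
  have uniq: "j = k" if jn: "A$i$j \<noteq> 0" and kn: "A$i$k \<noteq> 0" for i j k
  proof (rule ccontr)
    assume jk: "j \<noteq> k"
    define s where "s = (\<Sum>l\<in>UNIV-{j}-{k}. A$i$l)"
    have "\<exists>t::'a. t \<noteq> 0 \<and> A$i$k * t + s \<noteq> 0"
    proof (cases "A$i$k * 1 + s = 0")
      case True
      have eq: "A$i$k * 2 + s = A$i$k + (A$i$k * 1 + s)" by (simp add: algebra_simps)
      have "A$i$k * 2 + s \<noteq> 0" unfolding eq using True kn by simp
      then show ?thesis by (intro exI[of _ 2]) simp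
    next
      case False then show ?thesis by (intro exI[of _ 1]) simp
    qed
    then obtain t where t0: "t \<noteq> 0" and ts: "A$i$k * t + s \<noteq> 0" by blast
    define x :: "'a^'n" where "x = (\<chi> l. if l = j then -(A$i$k*t+s)/A$i$j else if l = k then t else 1)"
    have xnz: "x$l \<noteq> 0" for l using t0 ts jn by (auto simp: x_def)
    have "(A *v x)$i = (\<Sum>l\<in>UNIV. A$i$l * x$l)" by (simp add: matrix_vector_mult_def)
    also have "\<dots> = A$i$j * x$j + (\<Sum>l\<in>UNIV-{j}. A$i$l * x$l)" by (simp add: sum.remove)
    also have "(\<Sum>l\<in>UNIV-{j}. A$i$l * x$l) = A$i$k*x$k + (\<Sum>l\<in>UNIV-{j}-{k}. A$i$l*x$l)"
      using jk by (intro sum.remove) auto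
    also have "(\<Sum>l\<in>UNIV-{j}-{k}. A$i$l*x$l) = s" unfolding s_def by (rule sum.cong) (auto simp: x_def)
    finally have "(A *v x)$i = 0" using jn jk by (simp add: x_def)
    then have "(A *v x)$i ^ \<alpha> i = 0" using pos by (simp add: Suc_le_eq)
    then have "monomial_fun \<alpha> (A *v x) = 0" unfolding monomial_fun_def
      by (simp add: prod_zero_iff) blast
    moreover have "monomial_fun \<alpha> x \<noteq> 0" unfolding monomial_fun_def using xnz
      by (simp add: prod_zero_iff)
    ultimately show False using m by metis
  qed
  define \<sigma> where "\<sigma> i = (THE j. A$i$j \<noteq> 0)" for i
  have \<sigma>: "A$i$(\<sigma> i) \<noteq> 0" for i
  proof -
    obtain j where j: "A$i$j \<noteq> 0" using ex by blast
    show ?thesis unfolding \<sigma>_def by (rule theI[where a=j], rule j, rule uniq, assumption, rule j)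
  qed
  have \<sigma>0: "A$i$j = 0" if "j \<noteq> \<sigma> i" for i j using uniq[OF _ \<sigma>[of i], of j] that by blast
  define c where "c i = A$i$(\<sigma> i)" for i
  have Ax: "A *v x = (\<chi> i. c i * x$(\<sigma> i))" for x
  proof -
    have "(\<Sum>j\<in>UNIV. A$i$j * x$j) = (\<Sum>j\<in>UNIV. if j = \<sigma> i then c i * x$j else 0)" for i
      by (rule sum.cong) (auto simp: c_def \<sigma>0)
    then show ?thesis by (simp add: matrix_vector_mult_def vec_eq_iff)
  qed
  have Aeq: "A = diag_mat c ** perm_mat \<sigma>"
    by (simp add: matrix_eq Ax mv_diag mv_perm flip: matrix_vector_mul_assoc)
  have surj: "surj \<sigma>"
  proof (rule ccontr)
    assume "\<not> surj \<sigma>" then obtain j where j: "\<And>i. \<sigma> i \<noteq> j" unfolding surj_def by (metis)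
    have "A$i$j = 0" for i using \<sigma>0 j by metis
    then have "(B ** A)$j$j = 0" by (simp add: matrix_matrix_mult_def)
    with BA show False by (simp add: mat_def)
  qed
  then have bij: "bij \<sigma>" using finite_UNIV_surj_inj[OF finite_class.finite_UNIV surj] surj by (simp add: bij_def)
  then have perm: "\<sigma> permutes UNIV" by (intro bij_imp_permutes) auto
  have inj: "\<sigma> l = \<sigma> i \<longleftrightarrow> l = i" for l i using bij by (meson bij_def injD)
  have P: "(\<Prod>i\<in>UNIV. c i ^ \<alpha> i) = 1"
    using m[of "\<chi> i. 1"] by (simp add: monomial_fun_def Ax)
  have al: "\<alpha> i = \<alpha> (\<sigma> i)" for i
  proof -
    define x :: "'a^'n" where "x = (\<chi> l. if l = \<sigma> i then 2 else 1)"
    have "monomial_fun \<alpha> x = (\<Prod>l\<in>UNIV. if l = \<sigma> i then 2 ^ \<alpha> l else 1)"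
      unfolding monomial_fun_def x_def by (rule prod.cong) auto
    also have "\<dots> = 2 ^ \<alpha> (\<sigma> i)" by simp
    finally have 1: "monomial_fun \<alpha> x = 2 ^ \<alpha> (\<sigma> i)" .
    have "monomial_fun \<alpha> (A *v x) = (\<Prod>l\<in>UNIV. c l ^ \<alpha> l) * (\<Prod>l\<in>UNIV. (x $ \<sigma> l) ^ \<alpha> l)"
      unfolding monomial_fun_def Ax by (simp add: power_mult_distrib prod.distrib)
    also have "(\<Prod>l\<in>UNIV. (x $ \<sigma> l) ^ \<alpha> l) = (\<Prod>l\<in>UNIV. if l = i then 2 ^ \<alpha> l else 1)"
      unfolding x_def by (rule prod.cong) (auto simp: inj)
    also have "\<dots> = 2 ^ \<alpha> i" by simp
    finally have "monomial_fun \<alpha> (A *v x) = 2 ^ \<alpha> i" using P by simp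
    with 1 m have "(2::'a) ^ \<alpha> i = 2 ^ \<alpha> (\<sigma> i)" by metis
    then have "of_nat (2 ^ \<alpha> i) = (of_nat (2 ^ \<alpha> (\<sigma> i)) :: 'a)" by simp
    then have "(2::nat) ^ \<alpha> i = 2 ^ \<alpha> (\<sigma> i)" by (simp only: of_nat_eq_iff)
    then show ?thesis by simp
  qed
  have "perm_mat \<sigma> \<in> perm_generators \<alpha>" using perm al by (auto simp: perm_generators_def)
  moreover have "diag_mat c \<in> diag_generators \<alpha>" using P by (auto simp: diag_generators_def)
  ultimately show ?thesis using Aeq generated_group.gen_mult generated_group.gen_base by (metis UnI1 UnI2)
qed

theorem lemma4:
  fixes \<alpha> :: "'n::finite \<Rightarrow> nat"
  assumes "\<forall>i. \<alpha> i \<ge> 1"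
  shows "(invariant_group \<alpha> :: ('a::field_char_0 ^ 'n ^ 'n) set)
           = generated_group (diag_generators \<alpha> \<union> perm_generators \<alpha>)"
  using inv_sub[OF assms] gen_sub[OF assms] by blast

end
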